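(* Let $q$ be odd, and for $a\in\mathbb{F}_{q^3}$ let $\operatorname{T}(a)=a+a^q+a^{q^2}$ and $\operatorname{N}(a)=a^{1+q+q^2}$ denote the trace and norm from $\mathbb{F}_{q^3}$ to $\mathbb{F}_q$. Then for arbitrary $\beta,\gamma\in\mathbb{F}_q$ there exists $s\in\mathbb{F}_{q^3}\setminus\mathbb{F}_q$ such that $$\operatorname{T}\big(s(s+\beta)\big)+\operatorname{N}(s)=-\gamma.$$ In particular, let $\alpha\in\overline{\mathbb{F}}_q$ be a root of unity of order $q^2+q+1$, let $$f_3(X)=(X-1)^2(X-\alpha)(X-\alpha^{-1})(X-\alpha^{q})(X-\alpha^{-q})(X-\alpha^{q+1})(X-\alpha^{-q-1}),$$ and let $D$ be the $8\times8$ matrix over $\mathbb{F}_{q^3}(t,s)$ (with $t,s$ indeterminates) $$D=\begin{pmatrix}-t&-(s^{1+q+q^2}+s^{q^2}t^q+t^{q^2}s)&s^{1+q}+t^q&-t^{q^2}&-s&s^{q^2}&1&0\\-1&0&0&0&0&0&0&0\\0&-(s^{q+q^2}+t^{q^2})&s^q&0&-1&0&0&0\\0&-s^{q^2}&1&0&0&0&0&0\\0&-t^q&0&s^q&0&1&0&0\\0&-s&0&-1&0&0&0&0\\0&-t&0&0&0&0&0&-1\\0&1&0&0&0&0&0&0\end{pmatrix};$$ then there is a specialization $t\mapsto t_0$, $s\mapsto s_0$ with $t_0,s_0\in\mathbb{F}_{q^3}$ under which the characteristic polynomial of $D$ becomes $f_3$. *)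

theory Defs
  imports "Jordan_Normal_Form.Char_Poly"
begin

text \<open>The field F_{q^3} is modelled as a finite field type 'a with CARD('a) = q^3;
  the subfield F_q is the set of elements x with x^q = x.\<close>

definition Tr3 :: "nat \<Rightarrow> 'a::field \<Rightarrow> 'a" where
  "Tr3 q a = a + a ^ q + a ^ (q ^ 2)"

definition Nm3 :: "nat \<Rightarrow> 'a::field \<Rightarrow> 'a" where
  "Nm3 q a = a ^ (1 + q + q ^ 2)"

definition f3 :: "nat \<Rightarrow> 'a::field \<Rightarrow> 'a poly" where
  "f3 q \<alpha> = [:-1, 1:] ^ 2 * [:- \<alpha>, 1:] * [:- inverse \<alpha>, 1:]
      * [:- (\<alpha> ^ q), 1:] * [:- inverse (\<alpha> ^ q), 1:]
      * [:- (\<alpha> ^ (q + 1)), 1:] * [:- inverse (\<alpha> ^ (q + 1)), 1:]"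

text \<open>The 8x8 matrix D with the indeterminates t, s specialised to t0, s0.\<close>
definition Dmat :: "nat \<Rightarrow> 'a::field \<Rightarrow> 'a \<Rightarrow> 'a mat" where
  "Dmat q t s = mat_of_rows_list 8
    [[- t, - (s ^ (1 + q + q ^ 2) + s ^ (q ^ 2) * t ^ q + t ^ (q ^ 2) * s),
          s ^ (1 + q) + t ^ q, - (t ^ (q ^ 2)), - s, s ^ (q ^ 2), 1, 0],
     [-1, 0, 0, 0, 0, 0, 0, 0],
     [0, - (s ^ (q + q ^ 2) + t ^ (q ^ 2)), s ^ q, 0, -1, 0, 0, 0],
     [0, - (s ^ (q ^ 2)), 1, 0, 0, 0, 0, 0],
     [0, - (t ^ q), 0, s ^ q, 0, 1, 0, 0],
     [0, - s, 0, -1, 0, 0, 0, 0],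
     [0, - t, 0, 0, 0, 0, 0, -1],
     [0, 1, 0, 0, 0, 0, 0, 0]]"

end

theory Submission
  imports Defs "HOL-Number_Theory.Cong"
begin

definition addclosed :: "'a::field set \<Rightarrow> bool" where
  "addclosed V \<longleftrightarrow> 0 \<in> V \<and> (\<forall>x\<in>V. \<forall>y\<in>V. x + y \<in> V)"

lemma addclosed_ofnat: "addclosed V \<Longrightarrow> v \<in> V \<Longrightarrow> of_nat k * v \<in> V"
  by (induction k) (auto simp: addclosed_def distrib_right)

lemma char_fin_prime:
  assumes "finite (UNIV :: 'a::field set)" shows "prime CHAR('a)"
  using finite_imp_CHAR_pos[OF assms] prime_CHAR_semidom by blast

lemma addclosed_neg:
  assumes fin: "finite (UNIV :: 'a::field set)" and V: "addclosed V" and v: "(v::'a) \<in> V"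
  shows "-v \<in> V"
proof -
  let ?p = "CHAR('a)"
  have pp: "prime ?p" by (rule char_fin_prime[OF fin])
  then have p1: "?p \<ge> 1" using prime_ge_1_nat by blast
  have "of_nat (?p - 1) = (of_nat ?p - 1 :: 'a)" using p1 by (simp add: of_nat_diff)
  also have "\<dots> = -1" by simp
  finally have "of_nat (?p - 1) * v = -v" by simp
  with addclosed_ofnat[OF V v, of "?p - 1"] show ?thesis by simp
qed

lemma ext_step:
  assumes fin: "finite (UNIV :: 'a::field set)" and V: "addclosed V" and x: "(x::'a) \<notin> V"
  defines "W \<equiv> (\<lambda>(c,v). of_nat c * x + v) ` ({..<CHAR('a)} \<times> V)"
  shows "addclosed W" "card W = CHAR('a) * card V"
proof -
  let ?p = "CHAR('a)"
  have pp: "prime ?p" by (rule char_fin_prime[OF fin])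
  have p0: "?p > 0" using pp prime_gt_0_nat by blast
  have modp: "of_nat (n mod ?p) = (of_nat n :: 'a)" for n
    by (simp add: of_nat_eq_iff_cong_CHAR cong_def)
  show "addclosed W" unfolding addclosed_def
  proof (intro conjI ballI)
    have "(0::nat, 0::'a) \<in> {..<?p} \<times> V" using V p0 by (auto simp: addclosed_def)
    then have "(\<lambda>(c,v). of_nat c * x + v) (0,0) \<in> W" unfolding W_def by (rule imageI)
    then show "0 \<in> W" by simp
  next
    fix a b assume "a \<in> W" "b \<in> W"
    then obtain c v d w where cv: "c < ?p" "v \<in> V" "a = of_nat c * x + v"
      and dw: "d < ?p" "w \<in> V" "b = of_nat d * x + w" unfolding W_def by auto
    have "a + b = of_nat ((c + d) mod ?p) * x + (v + w)"
      unfolding cv dw modp by (simp add: algebra_simps)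
    moreover have "v + w \<in> V" using V cv dw unfolding addclosed_def by auto
    moreover have "(c + d) mod ?p < ?p" using p0 by simp
    ultimately show "a + b \<in> W" unfolding W_def by force
  qed
  have inj: "inj_on (\<lambda>(c,v). of_nat c * x + v) ({..<?p} \<times> V)"
  proof (rule inj_onI, clarsimp)
    have key: "c = d" if cd: "c < ?p" "d < ?p" "c < d" "v \<in> V" "w \<in> V"
       "of_nat c * x + v = of_nat d * x + w" for c d v w
    proof -
      have "of_nat (d - c) * x = v + - w" using cd by (simp add: of_nat_diff algebra_simps)
      moreover have "v + - w \<in> V" using V addclosed_neg[OF fin V cd(5)] cd(4) unfolding addclosed_def by auto
      ultimately have inV: "of_nat (d - c) * x \<in> V" by simp
      have "\<not> ?p dvd (d - c)" using cd by (auto dest: dvd_imp_le)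
      then have "coprime ?p (d - c)" using pp by (intro prime_imp_coprime_nat)
      then have "coprime (d - c) ?p" by (simp add: coprime_commute)
      then obtain m where m: "[(d - c) * m = Suc 0] (mod ?p)" using cong_solve_coprime_nat by blast
      have "of_nat ((d - c) * m) = (of_nat (Suc 0)::'a)"
        using m by (simp only: of_nat_eq_iff_cong_CHAR)
      then have "of_nat ((d - c) * m) = (1::'a)" by simp
      then have "x = of_nat m * (of_nat (d - c) * x)" by (simp add: algebra_simps flip: of_nat_mult)
      also have "\<dots> \<in> V" by (rule addclosed_ofnat[OF V inV])
      finally have "x \<in> V" .
      then show ?thesis using x by simp
    qed
    fix c v d w assume h: "c < ?p" "v \<in> V" "d < ?p" "w \<in> V" "of_nat c * x + v = of_nat d * x + w"
    have "c = d"
    proof (cases c d rule: linorder_cases)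
      case less then show ?thesis using key h by blast
    next
      case greater then show ?thesis using key[of d c w v] h by auto
    qed auto
    then show "c = d \<and> v = w" using h by simp
  qed
  have finV: "finite V" by (rule finite_subset[OF subset_UNIV fin])
  have "card W = card ({..<?p} \<times> V)" unfolding W_def by (rule card_image[OF inj])
  then show "card W = ?p * card V" by (simp add: card_cartesian_product)
qed

lemma card_char_power:
  assumes fin: "finite (UNIV :: 'a::field set)"
  shows "\<exists>n. card (UNIV :: 'a set) = CHAR('a) ^ n"
proof -
  let ?p = "CHAR('a)"
  have pp: "prime ?p" by (rule char_fin_prime[OF fin])
  have main: "addclosed V \<Longrightarrow> card V = ?p ^ k \<Longrightarrow> \<exists>n. card (UNIV :: 'a set) = ?p ^ n" for V :: "'a set" and k
  proof (induction "card (UNIV :: 'a set) - card V" arbitrary: V k rule: less_induct)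
    case less
    show ?case
    proof (cases "V = UNIV")
      case True then show ?thesis using less by auto
    next
      case False
      then obtain x where x: "x \<notin> V" by auto
      define W where "W = (\<lambda>(c,v). of_nat c * x + v) ` ({..<CHAR('a)} \<times> V)"
      have W: "addclosed W" "card W = ?p * card V" using ext_step[OF fin less.prems(1) x] unfolding W_def by auto
      have "card V > 0" using less.prems pp by (simp add: prime_gt_0_nat)
      moreover have "2 * card V \<le> ?p * card V" using prime_ge_2_nat[OF pp] by simp
      ultimately have lt: "card V < card W" using W by linarith
      have "card W \<le> card (UNIV :: 'a set)" using fin by (rule card_mono) simp
      then have "card (UNIV :: 'a set) - card W < card (UNIV :: 'a set) - card V" using lt by linarith
      moreover have "card W = ?p ^ Suc k" using W less.prems by simp
      ultimately show ?thesis using less.hyps W(1) by blast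
    qed
  qed
  show ?thesis by (rule main[of "{0}" 0]) (auto simp: addclosed_def)
qed

definition P3 :: "'a::field \<times> 'a \<times> 'a \<Rightarrow> 'a \<Rightarrow> 'a" where
  "P3 e x = x^3 - fst e * x^2 + fst (snd e) * x - snd (snd e)"

definition sym3 :: "'a::field \<Rightarrow> 'a \<Rightarrow> 'a \<Rightarrow> 'a \<times> 'a \<times> 'a" where
  "sym3 x y z = (x + y + z, x*y + y*z + z*x, x*y*z)"

lemma P3_sym3: "P3 (sym3 x y z) w = (w - x) * (w - y) * (w - z)"
  unfolding P3_def sym3_def by (simp add: algebra_simps power2_eq_square power3_eq_cube)

lemma vieta2:
  fixes x y :: "'a::field"
  assumes "x \<noteq> y" "P3 e x = 0" "P3 e y = 0"
  shows "e = sym3 x y (fst e - x - y)"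
proof -
  obtain a b c where e: "e = (a, b, c)" by (cases e) auto
  have "P3 e x - P3 e y = (x - y) * (x^2 + x*y + y^2 - a*(x+y) + b)"
    unfolding P3_def e by (simp add: algebra_simps power2_eq_square power3_eq_cube)
  then have "(x - y) * (x^2 + x*y + y^2 - a*(x+y) + b) = 0" using assms by simp
  then have S: "x^2 + x*y + y^2 - a*(x+y) + b = 0" using assms(1) by simp
  have hb: "b = a*(x+y) - x^2 - x*y - y^2"
  proof -
    have "b = b - (x^2 + x*y + y^2 - a*(x+y) + b)" using S by simp
    also have "\<dots> = a*(x+y) - x^2 - x*y - y^2" by (simp add: algebra_simps)
    finally show ?thesis .
  qed
  have hc: "c = x^3 - a*x^2 + b*x" using assms(2) unfolding P3_def e by (simp add: algebra_simps)
  show ?thesis unfolding e sym3_def hc hb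
    by (simp add: algebra_simps power2_eq_square power3_eq_cube)
qed

lemma vieta3:
  fixes x y z :: "'a::field"
  assumes "x \<noteq> y" "x \<noteq> z" "y \<noteq> z" "P3 e x = 0" "P3 e y = 0" "P3 e z = 0"
  shows "e = sym3 x y z"
proof -
  have e: "e = sym3 x y (fst e - x - y)" by (rule vieta2) (use assms in auto)
  have "P3 e z = (z - x) * (z - y) * (z - (fst e - x - y))" by (subst e, rule P3_sym3)
  then have "z = fst e - x - y" using assms by simp
  then show ?thesis using e by simp
qed

definition D2 :: "'b set \<Rightarrow> ('b \<times> 'b) set" where
  "D2 A = {(x,y). x \<in> A \<and> y \<in> A \<and> x \<noteq> y}"

definition D3 :: "'b set \<Rightarrow> (('b \<times> 'b) \<times> 'b) set" where
  "D3 A = {((x,y),z). x \<in> A \<and> y \<in> A \<and> z \<in> A \<and> x \<noteq> y \<and> x \<noteq> z \<and> y \<noteq> z}"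

lemma card_D2: assumes "finite A" shows "card (D2 A) = card A * card A - card A"
proof -
  have "D2 A = A \<times> A - (\<lambda>x. (x,x)) ` A" unfolding D2_def by auto
  moreover have "card ((\<lambda>x. (x,x)) ` A) = card A" by (rule card_image) (auto simp: inj_on_def)
  moreover have "(\<lambda>x. (x,x)) ` A \<subseteq> A \<times> A" by auto
  moreover have "finite ((\<lambda>x. (x,x)) ` A)" using assms by simp
  ultimately show ?thesis using assms
    by (simp add: card_Diff_subset card_cartesian_product)
qed

lemma finite_D2: "finite A \<Longrightarrow> finite (D2 A)"
  unfolding D2_def by (rule finite_subset[of _ "A \<times> A"]) auto

lemma card_D3: assumes "finite A" shows "card (D3 A) = (card A * card A - card A) * (card A - 2)"
proof -
  have eq: "D3 A = Sigma (D2 A) (\<lambda>(x,y). A - {x,y})" unfolding D2_def D3_def by auto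
  have "card (D3 A) = (\<Sum>p\<in>D2 A. card ((\<lambda>(x,y). A - {x,y}) p))"
    unfolding eq by (rule card_SigmaI) (use assms finite_D2 in auto)
  also have "\<dots> = (\<Sum>p\<in>D2 A. card A - 2)"
  proof (rule sum.cong[OF refl])
    fix p assume "p \<in> D2 A"
    then obtain x y where p: "p = (x,y)" "x \<in> A" "y \<in> A" "x \<noteq> y" unfolding D2_def by auto
    then have "card (A - {x,y}) = card A - card {x,y}" using assms
      by (intro card_Diff_subset) auto
    then have "card (A - {x,y}) = card A - 2" using p by simp
    then show "card ((\<lambda>(x,y). A - {x,y}) p) = card A - 2" using p by simp
  qed
  finally show ?thesis using card_D2[OF assms] by simp
qed

lemma finite_D3: "finite A \<Longrightarrow> finite (D3 A)"
  unfolding D3_def by (rule finite_subset[of _ "(A \<times> A) \<times> A"]) auto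

locale subf =
  fixes K :: "'a::field set"
  assumes finK: "finite K"
    and addK: "x \<in> K \<Longrightarrow> y \<in> K \<Longrightarrow> x + y \<in> K"
    and mulK: "x \<in> K \<Longrightarrow> y \<in> K \<Longrightarrow> x * y \<in> K"
    and negK: "x \<in> K \<Longrightarrow> - x \<in> K"
    and zeroK: "0 \<in> K"
    and oneK: "1 \<in> K"
begin

lemma diffK: "x \<in> K \<Longrightarrow> y \<in> K \<Longrightarrow> x - y \<in> K"
  using addK negK by (metis diff_conv_add_uminus)

lemma powK: "x \<in> K \<Longrightarrow> x ^ n \<in> K"
  by (induction n) (auto intro: mulK oneK)

abbreviation "K3 \<equiv> K \<times> K \<times> K"

definition Z :: "'a \<times> 'a \<times> 'a \<Rightarrow> 'a set" where
  "Z e = {x \<in> K. P3 e x = 0}"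

definition I :: "('a \<times> 'a \<times> 'a) set" where
  "I = {e \<in> K3. Z e = {}}"

lemma finZ: "finite (Z e)" unfolding Z_def using finK by simp

lemma finK3: "finite K3" using finK by simp

lemma sym3K: "x \<in> K \<Longrightarrow> y \<in> K \<Longrightarrow> z \<in> K \<Longrightarrow> sym3 x y z \<in> K3"
  unfolding sym3_def by (auto intro!: addK mulK)

lemma S1: "(\<Sum>e\<in>K3. card (Z e)) = card K ^ 3"
proof -
  let ?f = "\<lambda>(x,a,b). ((a, b, x^3 - a*x^2 + b*x), x)"
  have eq: "Sigma K3 Z = ?f ` K3"
  proof
    show "Sigma K3 Z \<subseteq> ?f ` K3"
    proof clarify
      fix a b c x assume h: "a \<in> K" "b \<in> K" "c \<in> K" "x \<in> Z (a, b, c)"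
      then have "c = x^3 - a*x^2 + b*x" "x \<in> K" unfolding Z_def P3_def by (auto simp: algebra_simps)
      then show "((a, b, c), x) \<in> ?f ` K3" using h by (auto intro!: image_eqI[of _ _ "(x,a,b)"])
    qed
  next
    show "?f ` K3 \<subseteq> Sigma K3 Z"
      by (auto simp: Z_def P3_def intro!: addK mulK diffK powK)
  qed
  have inj: "inj_on ?f K3" by (auto simp: inj_on_def)
  have "(\<Sum>e\<in>K3. card (Z e)) = card (Sigma K3 Z)"
    by (rule card_SigmaI[symmetric]) (use finK3 finZ in auto)
  also have "\<dots> = card K3" unfolding eq by (rule card_image[OF inj])
  also have "\<dots> = card K ^ 3" by (simp add: card_cartesian_product power3_eq_cube)
  finally show ?thesis .
qed

lemma S2: "(\<Sum>e\<in>K3. card (D2 (Z e))) = (card K * card K - card K) * card K"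
proof -
  let ?f = "\<lambda>((x,y),z). (sym3 x y z, (x,y))"
  have eq: "Sigma K3 (\<lambda>e. D2 (Z e)) = ?f ` (D2 K \<times> K)"
  proof
    show "Sigma K3 (\<lambda>e. D2 (Z e)) \<subseteq> ?f ` (D2 K \<times> K)"
    proof clarify
      fix a b c x y assume h: "a \<in> K" "b \<in> K" "c \<in> K" "(x, y) \<in> D2 (Z (a, b, c))"
      then have xy: "x \<in> K" "y \<in> K" "x \<noteq> y" "P3 (a,b,c) x = 0" "P3 (a,b,c) y = 0"
        unfolding D2_def Z_def by auto
      have e: "(a,b,c) = sym3 x y (a - x - y)" using vieta2[OF xy(3-5)] by simp
      have z: "a - x - y \<in> K" using h xy by (intro diffK) auto
      show "((a, b, c), x, y) \<in> ?f ` (D2 K \<times> K)"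
        using xy z e by (auto simp: D2_def intro!: image_eqI[of _ _ "((x,y), a - x - y)"])
    qed
  next
    show "?f ` (D2 K \<times> K) \<subseteq> Sigma K3 (\<lambda>e. D2 (Z e))"
    proof
      fix t assume "t \<in> ?f ` (D2 K \<times> K)"
      then obtain x y z where h: "(x,y) \<in> D2 K" "z \<in> K" "t = (sym3 x y z, (x,y))" by auto
      then show "t \<in> Sigma K3 (\<lambda>e. D2 (Z e))"
        using sym3K[of x y z] by (auto simp: D2_def Z_def P3_sym3)
    qed
  qed
  have inj: "inj_on ?f (D2 K \<times> K)" by (auto simp: inj_on_def sym3_def)
  have "(\<Sum>e\<in>K3. card (D2 (Z e))) = card (Sigma K3 (\<lambda>e. D2 (Z e)))"
    by (rule card_SigmaI[symmetric]) (use finK3 finZ finite_D2 in auto)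
  also have "\<dots> = card (D2 K \<times> K)" unfolding eq by (rule card_image[OF inj])
  also have "\<dots> = (card K * card K - card K) * card K"
    using finK by (simp add: card_cartesian_product card_D2)
  finally show ?thesis .
qed

lemma S3: "(\<Sum>e\<in>K3. card (D3 (Z e))) = card (D3 K)"
proof -
  let ?f = "\<lambda>t. (case t of ((x,y),z) \<Rightarrow> sym3 x y z, t)"
  have eq: "Sigma K3 (\<lambda>e. D3 (Z e)) = ?f ` (D3 K)"
  proof
    show "Sigma K3 (\<lambda>e. D3 (Z e)) \<subseteq> ?f ` (D3 K)"
    proof clarify
      fix a b c x y z assume h: "a \<in> K" "b \<in> K" "c \<in> K" "((x, y), z) \<in> D3 (Z (a, b, c))"
      then have xy: "x \<in> K" "y \<in> K" "z \<in> K" "x \<noteq> y" "x \<noteq> z" "y \<noteq> z"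
        "P3 (a,b,c) x = 0" "P3 (a,b,c) y = 0" "P3 (a,b,c) z = 0"
        unfolding D3_def Z_def by auto
      have e: "(a,b,c) = sym3 x y z" using vieta3[OF xy(4-9)] .
      show "((a, b, c), (x, y), z) \<in> ?f ` (D3 K)"
        using xy e by (auto simp: D3_def intro!: image_eqI[of _ _ "((x,y), z)"])
    qed
  next
    show "?f ` (D3 K) \<subseteq> Sigma K3 (\<lambda>e. D3 (Z e))"
    proof
      fix t assume "t \<in> ?f ` (D3 K)"
      then obtain x y z where h: "((x,y),z) \<in> D3 K" "t = (sym3 x y z, ((x,y),z))" by auto
      then show "t \<in> Sigma K3 (\<lambda>e. D3 (Z e))"
        using sym3K[of x y z] by (auto simp: D3_def Z_def P3_sym3)
    qed
  qed
  have inj: "inj_on ?f (D3 K)" by (auto simp: inj_on_def)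
  have "(\<Sum>e\<in>K3. card (D3 (Z e))) = card (Sigma K3 (\<lambda>e. D3 (Z e)))"
    by (rule card_SigmaI[symmetric]) (use finK3 finZ finite_D3 in auto)
  also have "\<dots> = card (D3 K)" unfolding eq by (rule card_image[OF inj])
  finally show ?thesis .
qed

lemma card_Z_le3: "card (Z e) \<le> 3"
proof (rule ccontr)
  assume "\<not> card (Z e) \<le> 3"
  then have r: "card (Z e) \<ge> 4" by simp
  then have "(card (Z e) * card (Z e) - card (Z e)) * (card (Z e) - 2) > 0"
    by (simp add: less_le_trans[of 0 "card (Z e)"])
  then have "D3 (Z e) \<noteq> {}" using card_D3[OF finZ] by (metis card.empty less_irrefl)
  then obtain x y z where xyz: "x \<in> Z e" "y \<in> Z e" "z \<in> Z e" "x \<noteq> y" "x \<noteq> z" "y \<noteq> z"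
    unfolding D3_def by auto
  have e: "e = sym3 x y z" using xyz by (intro vieta3) (auto simp: Z_def)
  have "Z e \<subseteq> {x, y, z}"
  proof
    fix w assume "w \<in> Z e"
    then have "P3 (sym3 x y z) w = 0" using e by (simp add: Z_def)
    then show "w \<in> {x,y,z}" by (simp add: P3_sym3)
  qed
  then have "card (Z e) \<le> card {x,y,z}" by (rule card_mono[rotated]) simp
  also have "\<dots> \<le> 3" by (simp add: card_insert_le_m1)
  finally show False using r by simp
qed

lemma card_I: "3 * card I = card K ^ 3 - card K"
proof -
  define k where "k = card K"
  have key: "int (6 * (if Z e = {} then 1 else 0)) =
     6 - 6 * int (card (Z e)) + 3 * int (card (D2 (Z e))) - int (card (D3 (Z e)))" for e
  proof -
    have r3: "card (Z e) \<le> 3" by (rule card_Z_le3)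
    have "card (Z e) = 0 \<or> card (Z e) = 1 \<or> card (Z e) = 2 \<or> card (Z e) = 3" using r3 by auto
    moreover have "Z e = {} \<longleftrightarrow> card (Z e) = 0" using finZ by simp
    ultimately show ?thesis by (auto simp: card_D2[OF finZ] card_D3[OF finZ])
  qed
  have cardI: "card I = (\<Sum>e\<in>K3. (if Z e = {} then 1 else 0))"
    unfolding I_def using finK3 by (simp add: sum.If_cases Int_def)
  have "int (6 * card I) = (\<Sum>e\<in>K3. int (6 * (if Z e = {} then 1 else 0)))"
    unfolding cardI by (simp add: sum_distrib_left)
  also have "\<dots> = (\<Sum>e\<in>K3. 6 - 6 * int (card (Z e)) + 3 * int (card (D2 (Z e))) - int (card (D3 (Z e))))"
    using key by simp
  also have "\<dots> = 6 * int (card K3) - 6 * int (\<Sum>e\<in>K3. card (Z e)) + 3 * int (\<Sum>e\<in>K3. card (D2 (Z e)))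
      - int (\<Sum>e\<in>K3. card (D3 (Z e)))"
    by (simp add: sum.distrib sum_subtractf sum_distrib_left)
  also have "\<dots> = 6 * int k^3 - 6 * int k^3 + 3 * int ((k*k - k) * k) - int ((k*k - k) * (k - 2))"
    unfolding S1 S2 S3 card_D3[OF finK] k_def by (simp add: card_cartesian_product power3_eq_cube)
  also have "\<dots> = 2 * (int k^3 - int k)"
  proof (cases "k \<ge> 2")
    case True
    then have kk: "k * k \<ge> k" by simp
    have a: "int (k*k - k) = int k * int k - int k" using kk by (simp add: of_nat_diff)
    have b: "int (k - 2) = int k - 2" using True by simp
    show ?thesis unfolding of_nat_mult a b by (simp add: algebra_simps power3_eq_cube)
  next
    case False
    then have "k = 0 \<or> k = 1" by auto
    then show ?thesis by auto
  qed
  finally have "int (3 * card I) = int k^3 - int k" by simp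
  moreover have "k \<le> k^3" by (simp add: power3_eq_cube)
  then have "int (k^3 - k) = int k^3 - int k" by (simp add: of_nat_diff)
  ultimately have "int (3 * card I) = int (k^3 - k)" by simp
  then show ?thesis unfolding k_def by (simp only: of_nat_eq_iff)
qed

end

definition fr :: "nat \<Rightarrow> 'a::field \<Rightarrow> 'a" where "fr q x = x ^ q"

lemma pow_card_same:
  assumes fin: "finite (UNIV :: 'a::field set)"
  shows "(x::'a) ^ card (UNIV :: 'a set) = x"
proof (cases "x = 0")
  case False
  have c0: "card (UNIV :: 'a set) > 0" using fin by (simp add: finite_UNIV_card_ge_0)
  have "x * (\<Prod>y\<in>UNIV-{0}. x * y) = x * x ^ (card (UNIV :: 'a set) - 1) * \<Prod>(UNIV-{0})"
    using fin by (simp add: prod.distrib mult_ac card_Diff_singleton)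
  also have "x * x ^ (card (UNIV :: 'a set) - 1) = x ^ Suc (card (UNIV :: 'a set) - 1)"
    by (subst power_Suc) auto
  also have "Suc (card (UNIV :: 'a set) - 1) = card (UNIV :: 'a set)" using c0 by simp
  also have "(\<Prod>y\<in>UNIV-{0}. x * y) = (\<Prod>y\<in>UNIV-{0}. y)"
    by (rule prod.reindex_bij_witness[of _ "\<lambda>y. y / x" "\<lambda>y. x * y"]) (use False in auto)
  finally have "x * \<Prod>(UNIV-{0}) = x ^ card (UNIV :: 'a set) * \<Prod>(UNIV-{0::'a})" .
  moreover have "\<Prod>(UNIV-{0::'a}) \<noteq> 0" using fin by (subst prod_zero_iff) auto
  ultimately show ?thesis by simp
qed (use fin finite_UNIV_card_ge_0[where ?'a = 'a] in auto)

locale ffq =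
  fixes TYP :: "'a::{finite,field} itself" and q :: nat
  assumes card_q: "card (UNIV :: 'a set) = q ^ 3"
    and oddq: "odd q"
begin

lemma fin: "finite (UNIV :: 'a set)" by simp

lemma q_ge3: "q \<ge> 3"
proof -
  have "q \<noteq> 0" using oddq by (cases q) auto
  moreover have "q \<noteq> 1"
  proof
    assume "q = 1"
    then have "card (UNIV :: 'a set) = 1" using card_q by simp
    then obtain z where "(UNIV :: 'a set) = {z}" using card_1_singletonE by blast
    then have "(0::'a) = 1" by (metis UNIV_I singletonD)
    then show False by simp
  qed
  moreover have "q \<noteq> 2" using oddq by auto
  ultimately show ?thesis by linarith
qed

lemma charp: "prime CHAR('a)" by (rule char_fin_prime[OF fin])

lemma q_pow: "\<exists>k. q = CHAR('a) ^ k"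
proof -
  obtain n where n: "card (UNIV :: 'a set) = CHAR('a) ^ n" using card_char_power[OF fin] by blast
  have "q dvd CHAR('a) ^ n" using n card_q by (metis dvd_triv_left power3_eq_cube mult.assoc)
  then obtain m where "m \<le> n" "normalize q = CHAR('a) ^ m" using divides_primepow[OF charp] by metis
  then show ?thesis by auto
qed

lemma fr_add: "fr q (x + y) = fr q x + fr q (y::'a)"
proof -
  obtain k where k: "q = CHAR('a) ^ k" using q_pow by blast
  show ?thesis unfolding fr_def by (rule freshmans_dream'[OF charp k])
qed

lemma fr_mult: "fr q (x * y) = fr q x * fr q (y::'a)"
  unfolding fr_def by (simp add: power_mult_distrib)

lemma fr_neg: "fr q (- x) = - fr q (x::'a)"
  unfolding fr_def using oddq by simp

lemma fr_diff: "fr q (x - y) = fr q x - fr q (y::'a)"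
  using fr_add[of x "-y"] fr_neg[of y] by simp

lemma fr_one: "fr q (1::'a) = 1" unfolding fr_def by simp
lemma fr_zero: "fr q (0::'a) = 0" unfolding fr_def using q_ge3 by simp

lemma fr3: "fr q (fr q (fr q x)) = (x::'a)"
proof -
  have "fr q (fr q (fr q x)) = x ^ (q ^ 3)"
    unfolding fr_def by (simp add: power_mult[symmetric] power3_eq_cube mult.assoc)
  also have "\<dots> = x" using pow_card_same[OF fin, of x] card_q by simp
  finally show ?thesis .
qed

lemma two_ne0: "(2::'a) \<noteq> 0"
proof
  assume "(2::'a) = 0"
  then have "of_nat 2 = (0::'a)" by simp
  then have "CHAR('a) dvd 2" by (simp only: of_nat_eq_0_iff_char_dvd)
  then have "CHAR('a) = 2" using charp by (metis prime_nat_iff two_is_prime_nat prime_gt_1_nat nat_neq_iff)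
  then obtain k where "q = 2 ^ k" using q_pow by auto
  then have "k = 0" using oddq by (cases k) auto
  then show False using \<open>q = 2 ^ k\<close> q_ge3 by simp
qed

definition Kq :: "'a set" where "Kq = {x. fr q x = x}"

lemma inKq: "x \<in> Kq \<longleftrightarrow> fr q x = x" unfolding Kq_def by simp

sublocale K: subf Kq
proof
  show "finite Kq" by simp
qed (auto simp: inKq fr_add fr_mult fr_neg fr_one fr_zero)

lemma card_Kq: "card Kq \<le> q"
proof -
  let ?P = "monom (1::'a) q - [:0, 1:]"
  have h: "degree (monom (1::'a) q + - [:0,1:]) = q"
    by (subst degree_add_eq_left) (use q_ge3 in \<open>simp_all add: degree_monom_eq\<close>)
  have dP: "degree ?P = q" using h by (simp only: diff_conv_add_uminus)
  then have "?P \<noteq> 0" using q_ge3 by auto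
  then have "card {x. poly ?P x = 0} \<le> q" using card_poly_roots_bound[of ?P] dP by simp
  moreover have "{x. poly ?P x = 0} = Kq" unfolding Kq_def fr_def by (auto simp: poly_monom)
  ultimately show ?thesis by simp
qed

end

context ffq
begin

definition phi :: "'a \<Rightarrow> 'a \<times> 'a \<times> 'a" where
  "phi s = sym3 s (fr q s) (fr q (fr q s))"

lemma phi_K3: "phi s \<in> K.K3"
  unfolding phi_def sym3_def
  by (simp add: inKq fr_add fr_mult fr3 algebra_simps)

lemma P3_phi: "P3 (phi s) x = (x - s) * (x - fr q s) * (x - fr q (fr q s))"
  unfolding phi_def by (rule P3_sym3)

lemma notK_fr:
  assumes "s \<notin> Kq"
  shows "fr q s \<notin> Kq" "fr q (fr q s) \<notin> Kq" "s \<noteq> fr q s" "s \<noteq> fr q (fr q s)" "fr q s \<noteq> fr q (fr q s)"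
proof -
  have s: "fr q s \<noteq> s" using assms by (simp add: inKq)
  show "fr q s \<notin> Kq"
  proof
    assume "fr q s \<in> Kq"
    then have h: "fr q (fr q s) = fr q s" by (simp add: inKq)
    have "s = fr q (fr q (fr q s))" by (simp add: fr3)
    also have "\<dots> = fr q (fr q s)" using h by simp
    also have "\<dots> = fr q s" using h by simp
    finally show False using s by simp
  qed
  show "fr q (fr q s) \<notin> Kq"
  proof
    assume "fr q (fr q s) \<in> Kq"
    then have "s = fr q (fr q s)" using fr3[of s] by (simp add: inKq)
    then have "fr q s = fr q (fr q (fr q s))" by simp
    then show False using s fr3 by simp
  qed
  show "s \<noteq> fr q s" using s by simp
  show "s \<noteq> fr q (fr q s)"
  proof
    assume "s = fr q (fr q s)"
    then have "fr q s = fr q (fr q (fr q s))" by simp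
    then show False using s fr3 by simp
  qed
  show "fr q s \<noteq> fr q (fr q s)"
  proof
    assume "fr q s = fr q (fr q s)"
    then have "fr q (fr q (fr q s)) = fr q (fr q (fr q (fr q s)))" by simp
    then show False using s fr3 by simp
  qed
qed

lemma phi_I: "s \<notin> Kq \<Longrightarrow> phi s \<in> K.I"
  unfolding K.I_def K.Z_def using phi_K3 notK_fr[of s]
  by (auto simp: P3_phi)

lemma phi_fr: "phi (fr q s) = phi s" "phi (fr q (fr q s)) = phi s"
  unfolding phi_def sym3_def fr3 by (simp_all add: algebra_simps)

lemma fiber:
  assumes "s \<notin> Kq"
  shows "{s' \<in> - Kq. phi s' = phi s} = {s, fr q s, fr q (fr q s)}"
proof
  show "{s' \<in> - Kq. phi s' = phi s} \<subseteq> {s, fr q s, fr q (fr q s)}"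
  proof
    fix s' assume "s' \<in> {s' \<in> - Kq. phi s' = phi s}"
    then have "phi s' = phi s" by simp
    then have "P3 (phi s) s' = 0" using P3_phi[of s' s'] by simp
    then show "s' \<in> {s, fr q s, fr q (fr q s)}" by (simp add: P3_phi)
  qed
next
  show "{s, fr q s, fr q (fr q s)} \<subseteq> {s' \<in> - Kq. phi s' = phi s}"
    using assms notK_fr[OF assms] phi_fr by auto
qed

lemma card_fiber: assumes a: "s \<notin> Kq" shows "card {s' \<in> - Kq. phi s' = phi s} = 3"
proof -
  have "card {s' \<in> - Kq. phi s' = phi s} = card {s, fr q s, fr q (fr q s)}" by (subst fiber[OF a]) (rule refl)
  also have "\<dots> = 3" using notK_fr[OF a] by simp
  finally show ?thesis .
qed

lemma card_notK: "card (- Kq) = 3 * card (phi ` (- Kq))"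
proof -
  let ?A = "- Kq"
  have eq: "?A = (\<Union>e\<in>phi ` ?A. {s' \<in> ?A. phi s' = e})" by auto
  have "card (\<Union>e\<in>phi ` ?A. {s' \<in> ?A. phi s' = e}) = (\<Sum>e\<in>phi ` ?A. card {s' \<in> ?A. phi s' = e})"
    by (rule card_UN_disjoint) auto
  then have "card ?A = (\<Sum>e\<in>phi ` ?A. card {s' \<in> ?A. phi s' = e})" using eq by simp
  also have "\<dots> = (\<Sum>e\<in>phi ` ?A. 3)"
  proof (rule sum.cong[OF refl])
    fix e assume "e \<in> phi ` ?A"
    then obtain x where x: "x \<notin> Kq" "e = phi x" by auto
    show "card {s' \<in> ?A. phi s' = e} = 3" using card_fiber[OF x(1)] x(2) by simp
  qed
  finally show ?thesis by simp
qed

lemma cardC: "card (- Kq) = q^3 - card Kq"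
proof -
  have "card (UNIV - Kq) = card (UNIV :: 'a set) - card Kq" by (rule card_Diff_subset) auto
  then show ?thesis using card_q by (simp add: Compl_eq_Diff_UNIV)
qed

lemma image_phi: "phi ` (- Kq) = K.I"
proof -
  have sub: "phi ` (- Kq) \<subseteq> K.I" using phi_I by auto
  have finI: "finite K.I" by simp
  have "3 * card K.I = card Kq ^ 3 - card Kq" by (rule K.card_I)
  also have "\<dots> \<le> q^3 - card Kq" using card_Kq by (simp add: power_mono diff_le_mono)
  also have "\<dots> = card (- Kq)" by (simp add: cardC)
  also have "\<dots> = 3 * card (phi ` (- Kq))" by (rule card_notK)
  finally have "card K.I \<le> card (phi ` (- Kq))" by simp
  then show ?thesis using sub finI by (metis card_seteq)
qed

end

context ffq
begin

lemma pow_q2: "(v::'a) ^ (q^2) = fr q (fr q v)"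
  unfolding fr_def by (simp add: power2_eq_square power_mult)

lemma Tr3_fr: "Tr3 q v = v + fr q v + fr q (fr q (v::'a))"
  unfolding Tr3_def pow_q2 by (simp add: fr_def)

lemma Nm3_fr: "Nm3 q s = s * fr q s * fr q (fr q (s::'a))"
  unfolding Nm3_def power_add pow_q2 by (simp add: fr_def)

lemma part1:
  assumes b: "\<beta> \<in> Kq" and g: "\<gamma> \<in> Kq"
  shows "\<exists>s::'a. s ^ q \<noteq> s \<and> Tr3 q (s * (s + \<beta>)) + Nm3 q s = - \<gamma>"
proof -
  have two: "(2::'a) \<in> Kq" using K.addK[OF K.oneK K.oneK] by (simp add: one_add_one)
  have "\<exists>a\<in>Kq. a^2 + (\<beta> - 4)*a + 8 + \<gamma> \<noteq> 0"
  proof (rule ccontr)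
    assume "\<not> ?thesis"
    then have h0: "0^2 + (\<beta> - 4)*0 + 8 + \<gamma> = (0::'a)" and h1: "1^2 + (\<beta> - 4)*1 + 8 + \<gamma> = (0::'a)"
      and h2: "(-1)^2 + (\<beta> - 4)*(-1) + 8 + \<gamma> = (0::'a)"
      using K.zeroK K.oneK K.negK[OF K.oneK] by blast+
    have "(2::'a) = (1^2 + (\<beta> - 4)*1 + 8 + \<gamma>) + ((-1)^2 + (\<beta> - 4)*(-1) + 8 + \<gamma>)
          - 2 * (0^2 + (\<beta> - 4)*0 + 8 + \<gamma>)" by (simp add: algebra_simps)
    also have "\<dots> = 0" using h0 h1 h2 by simp
    finally show False using two_ne0 by simp
  qed
  then obtain a where a: "a \<in> Kq" and Qa: "a^2 + (\<beta> - 4)*a + 8 + \<gamma> \<noteq> 0" by blast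
  define c0 where "c0 = a^2 + \<beta>*a + \<gamma>"
  have c0K: "c0 \<in> Kq" unfolding c0_def using a b g by (intro K.addK K.mulK K.powK) auto
  define gf where "gf x = -(x^3 - a*x^2 + c0) / (x - 2)" for x :: 'a
  define B where "B = {e\<in>Kq. \<exists>x\<in>Kq. P3 (a, e, 2*e - c0) x = 0}"
  have Bsub: "B \<subseteq> gf ` (Kq - {2})"
  proof
    fix e assume "e \<in> B"
    then obtain x where x: "x \<in> Kq" "P3 (a, e, 2*e - c0) x = 0" unfolding B_def by auto
    have P: "P3 (a, e, 2*e - c0) x = (x^3 - a*x^2 + c0) + e * (x - 2)"
      unfolding P3_def by (simp add: algebra_simps)
    have x2: "x \<noteq> 2"
    proof
      assume "x = 2"
      then have "P3 (a, e, 2*e - c0) x = a^2 + (\<beta> - 4)*a + 8 + \<gamma>"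
        unfolding P by (simp add: c0_def algebra_simps power2_eq_square)
      then show False using x Qa by simp
    qed
    then have "x - 2 \<noteq> 0" by simp
    then have "e = gf x" unfolding gf_def using x(2) P
      by (simp add: field_simps eq_neg_iff_add_eq_0 add.commute)
    then show "e \<in> gf ` (Kq - {2})" using x x2 by auto
  qed
  have "card B \<le> card (Kq - {2})" using Bsub by (metis card_image_le finite_Diff K.finK card_mono finite_imageI order_trans)
  also have "\<dots> = card Kq - 1" using two K.finK by simp
  finally have cB: "card B \<le> card Kq - 1" .
  have "card Kq > 0" using K.zeroK K.finK card_gt_0_iff by blast
  then have "\<not> Kq \<subseteq> B" using cB card_mono[of B Kq] unfolding B_def by auto
  then obtain e where e: "e \<in> Kq" "e \<notin> B" by auto
  define T where "T = (a, e, 2*e - c0)"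
  have TK: "T \<in> K.K3" unfolding T_def using a e two c0K by (auto intro!: K.mulK K.diffK)
  have TI: "T \<in> K.I" unfolding K.I_def K.Z_def using TK e unfolding B_def T_def by auto
  then obtain s where s: "s \<notin> Kq" "phi s = T" using image_phi by (metis imageE ComplD)
  have sum: "s + fr q s + fr q (fr q s) = a"
   and pr2: "s * fr q s + fr q s * fr q (fr q s) + fr q (fr q s) * s = e"
   and pr3: "s * fr q s * fr q (fr q s) = 2*e - c0"
    using s(2) unfolding phi_def sym3_def T_def by auto
  have frb: "fr q \<beta> = \<beta>" using b by (simp add: inKq)
  have "Tr3 q (s * (s + \<beta>)) + Nm3 q s =
    s * (s + \<beta>) + fr q s * (fr q s + \<beta>) + fr q (fr q s) * (fr q (fr q s) + \<beta>) + s * fr q s * fr q (fr q s)"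
    unfolding Tr3_fr Nm3_fr by (simp add: fr_mult fr_add frb)
  also have "\<dots> = (s + fr q s + fr q (fr q s))^2 - 2 * (s * fr q s + fr q s * fr q (fr q s) + fr q (fr q s) * s)
     + \<beta> * (s + fr q s + fr q (fr q s)) + s * fr q s * fr q (fr q s)"
    by (simp add: algebra_simps power2_eq_square)
  also have "\<dots> = a^2 - 2 * e + \<beta> * a + (2 * e - c0)" unfolding sum pr2 pr3 by simp
  also have "\<dots> = - \<gamma>" unfolding c0_def by (simp add: algebra_simps)
  finally have "Tr3 q (s * (s + \<beta>)) + Nm3 q s = - \<gamma>" .
  moreover have "s ^ q \<noteq> s" using s(1) by (simp add: inKq fr_def)
  ultimately show ?thesis by blast
qed

end

fun del :: "nat \<Rightarrow> 'x list \<Rightarrow> 'x list" where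
  "del _ [] = []"
| "del 0 (x#xs) = xs"
| "del (Suc i) (x#xs) = x # del i xs"

lemma length_del[simp]: "length (del i xs) = (if i < length xs then length xs - 1 else length xs)"
  by (induction i xs rule: del.induct) auto

lemma nth_del: "i < length xs \<Longrightarrow> i' < length xs - 1 \<Longrightarrow>
   del i xs ! i' = xs ! (if i' < i then i' else Suc i')"
proof (induction i xs arbitrary: i' rule: del.induct)
  case (3 i x xs)
  then show ?case by (cases i') auto
qed auto

lemma set_del: "set (del i xs) \<subseteq> set xs"
  by (induction i xs rule: del.induct) auto

fun det_l :: "nat \<Rightarrow> bool list list \<Rightarrow> 'a::comm_ring_1 list list \<Rightarrow> 'a" where
  "det_l 0 ms rs = 1"
| "det_l (Suc n) ms rs = sum_list (map (\<lambda>i. if hd (ms!i) then (-1)^i * hd (rs!i) *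
      det_l n (map tl (del i ms)) (map tl (del i rs)) else 0) [0..<Suc n])"

definition wf_l :: "nat \<Rightarrow> bool list list \<Rightarrow> 'a::zero list list \<Rightarrow> bool" where
  "wf_l n ms rs \<longleftrightarrow> length rs = n \<and> length ms = n \<and> (\<forall>r\<in>set rs. length r = n)
     \<and> (\<forall>r\<in>set ms. length r = n) \<and> (\<forall>i<n. \<forall>j<n. \<not> ms!i!j \<longrightarrow> rs!i!j = 0)"

lemma wf_l_minor:
  assumes "wf_l (Suc n) ms rs" "i < Suc n"
  shows "wf_l n (map tl (del i ms)) (map tl (del i rs))"
proof -
  have L: "length (del i rs) = n" "length (del i ms) = n" using assms unfolding wf_l_def by auto
  show ?thesis unfolding wf_l_def
  proof (intro conjI allI impI ballI)
    show "length (map tl (del i rs)) = n" "length (map tl (del i ms)) = n" using L by auto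
  next
    fix r assume "r \<in> set (map tl (del i rs))"
    then obtain r' where "r' \<in> set rs" "r = tl r'" using set_del by fastforce
    then show "length r = n" using assms unfolding wf_l_def by auto
  next
    fix r assume "r \<in> set (map tl (del i ms))"
    then obtain r' where "r' \<in> set ms" "r = tl r'" using set_del by fastforce
    then show "length r = n" using assms unfolding wf_l_def by auto
  next
    fix i' j assume ij: "i' < n" "j < n" "\<not> map tl (del i ms) ! i' ! j"
    define k where "k = (if i' < i then i' else Suc i')"
    have k: "k < Suc n" using ij unfolding k_def by auto
    have "map tl (del i ms) ! i' ! j = ms ! k ! Suc j"
      using ij L assms unfolding wf_l_def k_def
      by (simp add: nth_del nth_tl)
    moreover have "map tl (del i rs) ! i' ! j = rs ! k ! Suc j"
      using ij L assms unfolding wf_l_def k_def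
      by (simp add: nth_del nth_tl)
    ultimately show "map tl (del i rs) ! i' ! j = 0" using ij k assms unfolding wf_l_def by auto
  qed
qed

lemma det_l_correct:
  "wf_l n ms rs \<Longrightarrow> det (mat_of_rows_list n rs) = det_l n ms (rs :: 'a :: comm_ring_1 list list)"
proof (induction n arbitrary: ms rs)
  case 0
  then have "mat_of_rows_list 0 rs \<in> carrier_mat 0 0" unfolding wf_l_def mat_of_rows_list_def by auto
  then show ?case by simp
next
  case (Suc n)
  let ?A = "mat_of_rows_list (Suc n) rs"
  have A: "?A \<in> carrier_mat (Suc n) (Suc n)" using Suc.prems unfolding wf_l_def mat_of_rows_list_def by auto
  have "det ?A = (\<Sum>i<Suc n. ?A $$ (i,0) * cofactor ?A i 0)"
    by (rule laplace_expansion_column[OF A]) simp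
  also have "\<dots> = (\<Sum>i<Suc n. if hd (ms!i) then (-1)^i * hd (rs!i) *
      det_l n (map tl (del i ms)) (map tl (del i rs)) else 0)"
  proof (rule sum.cong[OF refl])
    fix i assume i: "i \<in> {..<Suc n}"
    have len: "length rs = Suc n" "length (rs!i) = Suc n" using Suc.prems i unfolding wf_l_def by auto
    have ne: "rs!i \<noteq> []" using len by auto
    have Ai: "?A $$ (i,0) = hd (rs!i)"
      using i len ne unfolding mat_of_rows_list_def by (simp add: hd_conv_nth)
    have md: "mat_delete ?A i 0 = mat_of_rows_list n (map tl (del i rs))"
    proof (rule eq_matI)
      fix i' j assume ij: "i' < dim_row (mat_of_rows_list n (map tl (del i rs)))"
         "j < dim_col (mat_of_rows_list n (map tl (del i rs)))"
      then have ij': "i' < n" "j < n" using len i unfolding mat_of_rows_list_def by auto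
      have k: "(if i' < i then i' else Suc i') < Suc n" using ij' by auto
      have lk: "length (rs ! (if i' < i then i' else Suc i')) = Suc n"
        using Suc.prems k unfolding wf_l_def by (metis nth_mem len(1))
      show "mat_delete ?A i 0 $$ (i', j) = mat_of_rows_list n (map tl (del i rs)) $$ (i', j)"
        using ij' len i k lk unfolding mat_delete_def mat_of_rows_list_def
        by (simp add: nth_del nth_tl)
    qed (use len i in \<open>auto simp: mat_of_rows_list_def\<close>)
    have IH: "det (mat_of_rows_list n (map tl (del i rs))) = det_l n (map tl (del i ms)) (map tl (del i rs))"
      by (rule Suc.IH, rule wf_l_minor[OF Suc.prems]) (use i in auto)
    have z: "\<not> hd (ms!i) \<Longrightarrow> hd (rs!i) = 0"
    proof -
      assume "\<not> hd (ms!i)"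
      moreover have "length (ms!i) = Suc n" using Suc.prems i unfolding wf_l_def by auto
      ultimately have "\<not> ms!i!0" by (cases "ms!i") auto
      then have "rs!i!0 = 0" using Suc.prems i unfolding wf_l_def by auto
      then show ?thesis using len by (cases "rs!i") auto
    qed
    show "?A $$ (i,0) * cofactor ?A i 0 = (if hd (ms!i) then (-1)^i * hd (rs!i) *
      det_l n (map tl (del i ms)) (map tl (del i rs)) else 0)"
      using z unfolding Ai cofactor_def md IH by auto
  qed
  also have "\<dots> = det_l (Suc n) ms rs"
    by (simp only: det_l.simps lessThan_atLeast0 interv_sum_list_conv_sum_set_nat set_upt)
  finally show ?case .
qed

fun dl :: "nat \<Rightarrow> bool list list \<Rightarrow> 'a::comm_ring_1 list list \<Rightarrow> 'a"
and da :: "nat \<Rightarrow> bool list list \<Rightarrow> 'a::comm_ring_1 list list \<Rightarrow> nat \<Rightarrow> nat \<Rightarrow> 'a" where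
  "dl 0 ms rs = 1"
| "dl (Suc n) ms rs = da n ms rs 0 (Suc n)"
| "da n ms rs i 0 = 0"
| "da n ms rs i (Suc k) = (if hd (ms!i) then (-1)^i * hd (rs!i) * dl n (map tl (del i ms)) (map tl (del i rs)) else 0) + da n ms rs (Suc i) k"

lemma da_eq: "da n ms rs i k = sum_list (map (\<lambda>j. if hd (ms!j) then (-1)^j * hd (rs!j) * dl n (map tl (del j ms)) (map tl (del j rs)) else 0) [i..<i+k])"
  by (induction k arbitrary: i) (auto simp: upt_rec)

lemma dl_eq: "dl n ms rs = det_l n ms rs"
proof (induction n arbitrary: ms rs)
  case (Suc n)
  show ?case by (simp only: dl.simps det_l.simps da_eq Suc.IH) simp
qed simp

lemma dl_num: "dl (numeral k) ms rs = dl (Suc (pred_numeral k)) ms rs"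
  by (simp add: numeral_eq_Suc)
lemma da_num: "da n ms rs i (numeral k) = da n ms rs i (Suc (pred_numeral k))"
  by (simp add: numeral_eq_Suc)

definition "mask8 = [[True,True,True,True,True,True,True,False],
  [True,True,False,False,False,False,False,False],
  [False,True,True,False,True,False,False,False],
  [False,True,True,True,False,False,False,False],
  [False,True,False,True,True,True,False,False],
  [False,True,False,True,False,True,False,False],
  [False,True,False,False,False,False,True,True],
  [False,True,False,False,False,False,False,True]]"

definition "rows8 (x::'a::comm_ring_1) t t1 t2 s s1 s2 n =
  [[x + t, n + s2*t1 + t2*s, -(s*s1 + t1), t2, s, -s2, -1, 0],
   [1, x, 0,0,0,0,0,0],
   [0, s1*s2 + t2, x - s1, 0, 1, 0,0,0],
   [0, s2, -1, x, 0,0,0,0],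
   [0, t1, 0, -s1, x, -1, 0,0],
   [0, s, 0, 1, 0, x, 0,0],
   [0, t, 0,0,0,0, x, 1],
   [0, -1, 0,0,0,0,0, x]]"

lemma wf8: "wf_l 8 mask8 (rows8 x t t1 t2 s s1 s2 n)"
  unfolding wf_l_def mask8_def rows8_def
  by (auto simp: less_Suc_eq numeral_eq_Suc)

lemma eight: "(8::nat) = Suc(Suc(Suc(Suc(Suc(Suc(Suc(Suc 0)))))))" by simp

lemma det8_raw: "det (mat_of_rows_list 8 (rows8 x t t1 t2 s s1 s2 n)) =
  x^8 + x^7*t - x^7*s1 - x^6*t*s1 - x^6*t1*s2 - x^6*t2*s - x^6*n - x^5*t - x^5*t1*t2 + x^5*t1*s + x^5*t2*s2 - x^5*s*s1^2*s2 - x^5*s*s2 + x^5*s1*n + x^5*s1 + 2*x^4*t*s1 + x^4*t1^2 + x^4*t2^2 + x^4*s^2 + 2*x^4*s*s1*s2 + x^4*s2^2 - 2*x^4 - x^3*t - x^3*t1*t2 + x^3*t1*s + x^3*t2*s2 + x^3*s*s1^2*s2 - x^3*s*s2 - x^3*s1*n + x^3*s1 - x^2*t*s1 - x^2*t1*s2 - x^2*t2*s - 2*x^2*s*s1*s2 + x^2*n + x*t - x*s1 + 1"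
  unfolding det_l_correct[OF wf8] dl_eq[symmetric]
  unfolding mask8_def rows8_def
  apply (subst eight)+
  apply (simp only: dl.simps da.simps nth_Cons_0 nth_Cons_Suc list.sel del.simps list.map if_True if_False
     mult_zero_left mult_zero_right add_0_left add_0_right power_0 power_Suc mult_1_left mult_1_right)
  by (simp add: algebra_simps numeral_eq_Suc power_Suc)

lemma Dmat_carrier: "Dmat q t s \<in> carrier_mat 8 8"
  unfolding carrier_mat_def Dmat_def mat_of_rows_list_def by (simp only: mem_Collect_eq dim_row_mat dim_col_mat list.size) simp

lemma A1: "mat_of_rows_list 8 (rows8 x t (t^q) (t^(q^2)) s (s^q) (s^(q^2)) (s^(1+q+q^2))) \<in> carrier_mat 8 8"
    unfolding carrier_mat_def rows8_def mat_of_rows_list_def by (simp only: mem_Collect_eq dim_row_mat dim_col_mat list.size) simp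
lemma A2: fixes x :: "'a::field" assumes i: "i < 8" and j: "j < 8" shows
   "poly (char_poly_matrix (Dmat q t s) $$ (i, j)) x = (if i = j then x else 0) - Dmat q t s $$ (i,j)"
proof -
  have D: "dim_row (Dmat q t s) = 8" "dim_col (Dmat q t s) = 8" using Dmat_carrier by auto
  show ?thesis unfolding char_poly_matrix_def using i j D by simp
qed

lemma lt8: "(i::nat) < 8 \<Longrightarrow> i = 0 \<or> i = 1 \<or> i = 2 \<or> i = 3 \<or> i = 4 \<or> i = 5 \<or> i = 6 \<or> i = 7"
  by auto
definition Dl :: "'a::field \<Rightarrow> 'a \<Rightarrow> 'a \<Rightarrow> 'a \<Rightarrow> 'a \<Rightarrow> 'a \<Rightarrow> 'a \<Rightarrow> 'a list list" where
  "Dl t t1 t2 s s1 s2 n = [[- t, - (n + s2 * t1 + t2 * s), s * s1 + t1, - t2, - s, s2, 1, 0],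
     [-1, 0, 0, 0, 0, 0, 0, 0],
     [0, - (s1 * s2 + t2), s1, 0, -1, 0, 0, 0],
     [0, - s2, 1, 0, 0, 0, 0, 0],
     [0, - t1, 0, s1, 0, 1, 0, 0],
     [0, - s, 0, -1, 0, 0, 0, 0],
     [0, - t, 0, 0, 0, 0, 0, -1],
     [0, 1, 0, 0, 0, 0, 0, 0]]"
lemma Dmat_Dl: "Dmat q t s = mat_of_rows_list 8 (Dl t (t^q) (t^(q^2)) s (s^q) (s^(q^2)) (s^(1+q+q^2)))"
  unfolding Dmat_def Dl_def by (simp add: power_add)
lemma mrl_index: "i < length rs \<Longrightarrow> j < n \<Longrightarrow> mat_of_rows_list n rs $$ (i,j) = rs ! i ! j"
  unfolding mat_of_rows_list_def by simp
lemma A3g: fixes x :: "'a::field" assumes i: "i < 8" and j: "j < 8" shows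
  "(if i = j then x else 0) - Dl t t1 t2 s s1 s2 n ! i ! j = rows8 x t t1 t2 s s1 s2 n ! i ! j"
  using lt8[OF i] lt8[OF j]
  by (elim disjE) (simp_all add: Dl_def rows8_def)

lemma charpoly_eval:
  fixes t s x :: "'a::field"
  shows "poly (char_poly (Dmat q t s)) x =
    det (mat_of_rows_list 8 (rows8 x t (t^q) (t^(q^2)) s (s^q) (s^(q^2)) (s^(1+q+q^2))))"
  unfolding char_poly_def
proof (rule poly_det_cong[of _ 8])
  show "mat_of_rows_list 8 (rows8 x t (t^q) (t^(q^2)) s (s^q) (s^(q^2)) (s^(1+q+q^2))) \<in> carrier_mat 8 8"
    by (rule A1)
  show "char_poly_matrix (Dmat q t s) \<in> carrier_mat 8 8" by (rule char_poly_matrix_closed[OF Dmat_carrier])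
  fix i j :: nat assume i: "i < 8" and j: "j < 8"
  have l: "length (Dl t (t^q) (t^(q^2)) s (s^q) (s^(q^2)) (s^(1+q+q^2))) = 8"
     "length (rows8 x t (t^q) (t^(q^2)) s (s^q) (s^(q^2)) (s^(1+q+q^2))) = 8"
    unfolding Dl_def rows8_def by simp_all
  have "poly (char_poly_matrix (Dmat q t s) $$ (i, j)) x = (if i = j then x else 0) - Dmat q t s $$ (i,j)"
    by (rule A2[OF i j])
  also have "Dmat q t s $$ (i,j) = Dl t (t^q) (t^(q^2)) s (s^q) (s^(q^2)) (s^(1+q+q^2)) ! i ! j"
    unfolding Dmat_Dl by (rule mrl_index) (use l i j in auto)
  also have "(if i = j then x else 0) - Dl t (t^q) (t^(q^2)) s (s^q) (s^(q^2)) (s^(1+q+q^2)) ! i ! j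
      = rows8 x t (t^q) (t^(q^2)) s (s^q) (s^(q^2)) (s^(1+q+q^2)) ! i ! j"
    by (rule A3g[OF i j])
  also have "\<dots> = mat_of_rows_list 8 (rows8 x t (t^q) (t^(q^2)) s (s^q) (s^(q^2)) (s^(1+q+q^2))) $$ (i, j)"
    by (rule mrl_index[symmetric]) (use l i j in auto)
  finally show "poly (char_poly_matrix (Dmat q t s) $$ (i, j)) x =
    mat_of_rows_list 8 (rows8 x t (t^q) (t^(q^2)) s (s^q) (s^(q^2)) (s^(1+q+q^2))) $$ (i, j)" .
qed

lemma dls: fixes p :: "'a::field poly" shows "degree p \<le> n \<Longrightarrow> degree (p * [:c, 1:]) \<le> Suc n"
  by (rule order.trans[OF degree_mult_le]) simp
lemma deg_f3: "degree (f3 q (\<alpha>::'a::field)) \<le> 8"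
proof -
  have "degree (f3 q \<alpha>) \<le> Suc(Suc(Suc(Suc(Suc(Suc 2)))))" unfolding f3_def
    apply (rule dls)+
    using degree_power_le[of "[:-1,1::'a:]" 2] by simp
  then show ?thesis by simp
qed
lemma pl: fixes c x :: "'a::comm_ring_1" shows "poly [:- c, 1:] x = x - c" by simp

definition G8 :: "'a::comm_ring_1 \<Rightarrow> 'a \<Rightarrow> 'a \<Rightarrow> 'a" where
  "G8 x u h = x^8 + u*x^7 - h*x^6 - (u+u^2)*x^5 + (2*h + 2*u^2 - 2)*x^4 - (u+u^2)*x^3 - h*x^2 + u*x + 1"

lemma det_sub:
  "det (mat_of_rows_list 8 (rows8 x (s1+u) (s2+u) (s+u) s s1 s2 (s*s1*s2))) =
   G8 x u (s*(s+u) + s1*(s1+u) + s2*(s2+u) + s*s1*s2)"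
  unfolding det8_raw G8_def by (simp add: algebra_simps numeral_eq_Suc power_Suc)

lemma ident2:
  "(x-1)^2 * (x^3 - e1*x^2 + e2*x - 1) * (x^3 - e2*x^2 + e1*x - 1) =
   G8 x (-(e1+e2+2)) (-(e1*e2+3*e1+3*e2+1))"
  unfolding G8_def by (simp add: algebra_simps numeral_eq_Suc power_Suc)

context ffq
begin

lemma part2:
  assumes al: "\<alpha> ^ (q^2 + q + 1) = (1::'a)"
  shows "\<exists>t0 s0 :: 'a. char_poly (Dmat q t0 s0) = f3 q \<alpha>"
proof -
  define y where "y = fr q \<alpha>"
  define w where "w = fr q y"
  have yq: "\<alpha> ^ q = y" unfolding y_def fr_def ..
  have wq: "\<alpha> ^ (q^2) = w" unfolding w_def y_def by (rule pow_q2)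
  have ayw: "\<alpha> * y * w = 1"
  proof -
    have "\<alpha> * y * w = \<alpha> ^ (1 + q + q^2)" unfolding power_add yq wq by simp
    also have "\<dots> = 1" using al by (simp add: add_ac)
    finally show ?thesis .
  qed
  have frw: "fr q w = \<alpha>" unfolding w_def y_def by (rule fr3)
  define e1 where "e1 = \<alpha> + y + w"
  define e2 where "e2 = \<alpha> * y + y * w + w * \<alpha>"
  have e1K: "e1 \<in> Kq" unfolding inKq e1_def by (simp add: fr_add frw flip: y_def w_def)
  have e2K: "e2 \<in> Kq" unfolding inKq e2_def by (simp add: fr_add fr_mult frw algebra_simps flip: y_def w_def)
  define u where "u = -(e1 + e2 + 2)"
  define g0 where "g0 = e1 * e2 + 3 * e1 + 3 * e2 + 1"
  have twoK: "(2::'a) \<in> Kq" using K.addK[OF K.oneK K.oneK] by (simp add: one_add_one)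
  have threeK: "(3::'a) \<in> Kq" using K.addK[OF twoK K.oneK] by simp
  have uK: "u \<in> Kq" unfolding u_def using e1K e2K twoK by (intro K.negK K.addK)
  have g0K: "g0 \<in> Kq" unfolding g0_def using e1K e2K threeK by (intro K.mulK K.addK K.oneK)
  obtain s where s: "s ^ q \<noteq> s" "Tr3 q (s * (s + u)) + Nm3 q s = - g0" using part1[OF uK g0K] by blast
  have fru: "fr q u = u" using uK by (simp add: inKq)
  define t where "t = fr q s + u"
  have tq: "t ^ q = fr q (fr q s) + u" unfolding t_def by (simp add: fr_def[symmetric] fr_add fru)
  have tq2: "t ^ (q^2) = s + u" unfolding pow_q2 t_def by (simp add: fr_add fru fr3)
  have sq: "s ^ q = fr q s" by (simp add: fr_def)
  have sq2: "s ^ (q^2) = fr q (fr q s)" by (rule pow_q2)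
  have sN: "s ^ (1 + q + q^2) = s * fr q s * fr q (fr q s)" using Nm3_fr[of s] by (simp add: Nm3_def)
  have h: "s * (s + u) + fr q s * (fr q s + u) + fr q (fr q s) * (fr q (fr q s) + u) + s * fr q s * fr q (fr q s) = - g0"
    using s(2) unfolding Tr3_fr Nm3_fr by (simp add: fr_mult fr_add fru)
  have LHS: "poly (char_poly (Dmat q t s)) x = G8 x u (- g0)" for x
    unfolding charpoly_eval tq tq2 sq sq2 sN unfolding t_def
    by (subst det_sub) (simp only: h)
  have ia: "inverse \<alpha> = y * w" by (rule inverse_unique) (use ayw in \<open>simp add: mult.assoc\<close>)
  have iy: "inverse y = \<alpha> * w" by (rule inverse_unique) (use ayw in \<open>simp add: algebra_simps\<close>)
  have iay: "inverse (\<alpha> * y) = w" by (rule inverse_unique) (use ayw in \<open>simp add: algebra_simps\<close>)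
  have aq1: "\<alpha>^(q+1) = \<alpha> * y" by (simp add: yq)
  have RHS: "poly (f3 q \<alpha>) x = G8 x u (- g0)" for x
  proof -
    have "poly (f3 q \<alpha>) x = (x-1)^2 * (x - \<alpha>) * (x - inverse \<alpha>) * (x - \<alpha>^q) * (x - inverse (\<alpha>^q))
        * (x - \<alpha>^(q+1)) * (x - inverse (\<alpha>^(q+1)))"
      unfolding f3_def by (simp only: poly_mult poly_power pl)
    also have "\<dots> = (x-1)^2 * ((x - \<alpha>) * (x - y) * (x - w)) * ((x - y*w) * (x - \<alpha>*w) * (x - \<alpha>*y))"
      unfolding aq1 yq ia iy iay by (simp only: mult_ac)
    also have "(x - \<alpha>) * (x - y) * (x - w) = x^3 - e1*x^2 + e2*x - \<alpha>*y*w"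
      unfolding e1_def e2_def by (simp add: algebra_simps power2_eq_square power3_eq_cube)
    also have "(x - y*w) * (x - \<alpha>*w) * (x - \<alpha>*y) = x^3 - e2*x^2 + (\<alpha>*y*w)*e1*x - (\<alpha>*y*w)^2"
      unfolding e1_def e2_def by (simp add: algebra_simps power2_eq_square power3_eq_cube)
    also have "(x-1)^2 * (x^3 - e1*x^2 + e2*x - \<alpha>*y*w) * (x^3 - e2*x^2 + (\<alpha>*y*w)*e1*x - (\<alpha>*y*w)^2)
       = G8 x u (- g0)"
      unfolding ayw u_def g0_def using ident2[of x e1 e2] by simp
    finally show ?thesis .
  qed
  have "char_poly (Dmat q t s) = f3 q \<alpha>"
  proof (rule poly_eqI_degree[of UNIV])
    show "poly (char_poly (Dmat q t s)) x = poly (f3 q \<alpha>) x" for x using LHS RHS by simp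
    have "(3::nat)^3 \<le> q^3" by (rule power_mono) (use q_ge3 in auto)
    then have c: "card (UNIV :: 'a set) > 8" using card_q by simp
    show "degree (char_poly (Dmat q t s)) < card (UNIV :: 'a set)"
      using degree_monic_char_poly[OF Dmat_carrier[of q t s]] c by simp
    have "degree (f3 q \<alpha>) \<le> 8" by (rule deg_f3)
    then show "degree (f3 q \<alpha>) < card (UNIV :: 'a set)" using c by simp
  qed
  then show ?thesis by blast
qed

end

theorem mainTheorem14:
  fixes q :: nat
  assumes "odd q"
    and "card (UNIV :: 'a::{finite,field} set) = q ^ 3"
  shows "(\<forall>\<beta> \<gamma> :: 'a. \<beta> ^ q = \<beta> \<longrightarrow> \<gamma> ^ q = \<gamma> \<longrightarrow>
            (\<exists>s :: 'a. s ^ q \<noteq> s \<and> Tr3 q (s * (s + \<beta>)) + Nm3 q s = - \<gamma>))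
       \<and> (\<forall>\<alpha> :: 'a. \<alpha> ^ (q ^ 2 + q + 1) = 1 \<longrightarrow>
            (\<forall>k. 0 < k \<and> k < q ^ 2 + q + 1 \<longrightarrow> \<alpha> ^ k \<noteq> 1) \<longrightarrow>
            (\<exists>t0 s0 :: 'a. char_poly (Dmat q t0 s0) = f3 q \<alpha>))"
proof -
  interpret ffq "TYPE('a)" q by unfold_locales (use assms in auto)
  show ?thesis
  proof (intro conjI allI impI)
    fix \<beta> \<gamma> :: 'a assume "\<beta> ^ q = \<beta>" "\<gamma> ^ q = \<gamma>"
    then have "\<beta> \<in> Kq" "\<gamma> \<in> Kq" by (simp_all add: inKq fr_def)
    then show "\<exists>s :: 'a. s ^ q \<noteq> s \<and> Tr3 q (s * (s + \<beta>)) + Nm3 q s = - \<gamma>" by (rule part1)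
  next
    fix \<alpha> :: 'a assume "\<alpha> ^ (q ^ 2 + q + 1) = 1"
    then show "\<exists>t0 s0 :: 'a. char_poly (Dmat q t0 s0) = f3 q \<alpha>" by (rule part2)
  qed
qed

end
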